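(* For $u_0\ll -1$ (i.e. $|u_0|$ large enough) there exist constants $0<c\leq C$, independent of $s\in(0,1]$ and of the smooth function $\phi$ on $\Omega_{u_0}$, such that $$c\,I_s(\phi)\leq \mathcal E_{\mathcal H_s}(\phi)\leq C\, I_s(\phi),\qquad I_s(\phi):=\int_{\mathcal H_s}\Big[u^2|\partial_u\phi|^2+\frac{R}{|u|}|\partial_R\phi|^2+|\nabla_{S^2}\phi|^2\Big]\,\mathrm{d}u\,\mathrm{d}\omega ,$$ where $\mathcal H_s$ is parametrised by $(u,\omega)$.
   Context: Vaidya spacetime: in coordinates $(u,r,\theta,\phi)$, $g=F\,\mathrm{d}u^2+2\,\mathrm{d}u\,\mathrm{d}r-r^2\mathrm{d}\omega^2$, $F=1-2m(u)/r$, with $m$ smooth, non-increasing, positive and bounded. Let $R=1/r$, so that $F=1-2m(u)R$; the rescaled metric is $\hat g=R^2g=R^2F\,\mathrm{d}u^2-2\,\mathrm{d}u\,\mathrm{d}R-\mathrm{d}\omega^2$. The function $\psi>0$ solves $\partial_u\psi-\frac F2\partial_r\psi+\frac{2m'(u)}{Fr}\psi=0$ with $\psi=1$ on past null infinity $\mathscr I^-$ (integrating along integral curves of $\partial_u-\frac F2\partial_r$); $v$ is a fixed function with $\mathrm{d}v=\psi\,\mathrm{d}u+2\psi F^{-1}\mathrm{d}r$; $\tilde r=(v-u)/2$, $t=(u+v)/2$. For $u_0<0$: $\Omega_{u_0}=\{t\ge0\}\cap\{u<u_0\}$ and, for $0<s\le1$, $\mathcal H_s=\{u=-s\tilde r\}\cap\{u<u_0\}$.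 Writing $\phi_u=\partial_u\phi,\ \phi_R=\partial_R\phi$ (in coordinates $(u,R,\omega)$) and $\nabla_{S^2}$ the gradient on the unit sphere, the energy is $$\mathcal E_{\mathcal H_s}(\phi)=\int_{\mathcal H_s}\Big\{u^2\phi_u^2+u^2R^2F\phi_u\phi_R+|\nabla_{S^2}\phi|^2\Big[u^2\frac{FR^2}{4s\psi}(2+s(\psi-1))+(1+uR)\Big]+R^2F\Big[\frac{2+s(\psi-1)}{4s\psi}\big((2+uR)^2-2m(u)u^2R^3\big)-(1+uR)\Big]\phi_R^2\Big\}\,\mathrm{d}u\,\mathrm{d}\omega .$$ (This is the flux through $\mathcal H_s$ of the current built from the Morawetz field $T=u^2\partial_u-2(1+uR)\partial_R$ and $T_{ab}=\nabla_a\phi\nabla_b\phi-\frac12\hat g_{ab}\nabla_c\phi\nabla^c\phi$.) *)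

theory Defs
  imports "HOL-Analysis.Analysis"
begin

fun Ck_on :: "nat \<Rightarrow> 'a::euclidean_space set \<Rightarrow> ('a \<Rightarrow> real) \<Rightarrow> bool" where
  "Ck_on 0 S f = continuous_on S f"
| "Ck_on (Suc k) S f = ((\<forall>x\<in>S. f differentiable (at x)) \<and>
      (\<forall>i\<in>Basis. Ck_on k S (\<lambda>x. frechet_derivative f (at x) i)))"

definition smooth_on :: "'a::euclidean_space set \<Rightarrow> ('a \<Rightarrow> real) \<Rightarrow> bool" where
  "smooth_on S f \<longleftrightarrow> open S \<and> (\<forall>k. Ck_on k S f)"

definition Fr :: "(real \<Rightarrow> real) \<Rightarrow> real \<Rightarrow> real \<Rightarrow> real" where
  "Fr m u r = 1 - 2 * m u / r"

definition exterior :: "(real \<Rightarrow> real) \<Rightarrow> (real \<times> real) set" where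
  "exterior m = {(u, r). r > 2 * m u}"

text \<open>Omega_{u0} = {t >= 0} inter {u < u0}, in coordinates (u,R), R = 1/r, t = (u+v)/2.\<close>
definition Omega :: "(real \<Rightarrow> real) \<Rightarrow> (real \<Rightarrow> real \<Rightarrow> real) \<Rightarrow> real \<Rightarrow> (real \<times> real) set" where
  "Omega m v u0 = {(u, R). R > 0 \<and> 1 / R > 2 * m u \<and> u < u0 \<and> (u + v u (1 / R)) / 2 \<ge> 0}"

text \<open>H_s = {u = - s * rtilde} inter {u < u0}, rtilde = (v - u)/2, in coordinates (u,R).\<close>
definition Hs :: "(real \<Rightarrow> real) \<Rightarrow> (real \<Rightarrow> real \<Rightarrow> real) \<Rightarrow> real \<Rightarrow> real \<Rightarrow> (real \<times> real) set" where
  "Hs m v u0 s = {(u, R). R > 0 \<and> 1 / R > 2 * m u \<and> u < u0 \<and> u = - s * ((v u (1 / R) - u) / 2)}"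

definition Hs_R :: "(real \<Rightarrow> real) \<Rightarrow> (real \<Rightarrow> real \<Rightarrow> real) \<Rightarrow> real \<Rightarrow> real \<Rightarrow> real \<Rightarrow> real" where
  "Hs_R m v u0 s u = (THE R. (u, R) \<in> Hs m v u0 s)"

definition sph :: "real \<Rightarrow> real \<Rightarrow> real^3" where
  "sph th vp = vector [sin th * cos vp, sin th * sin vp, cos th]"

text \<open>Parameter domain of H_s: (u, theta, varphi); the measure du d omega becomes
  sin theta du dtheta dvarphi (Lebesgue measure on R^3 times the density sin theta).\<close>
definition Hs_param :: "(real \<Rightarrow> real) \<Rightarrow> (real \<Rightarrow> real \<Rightarrow> real) \<Rightarrow> real \<Rightarrow> real \<Rightarrow> (real \<times> real \<times> real) set" where
  "Hs_param m v u0 s = {(u, th, vp). (\<exists>R. (u, R) \<in> Hs m v u0 s) \<and> 0 < th \<and> th < pi \<and> 0 < vp \<and> vp < 2 * pi}"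

definition phi_u :: "(real \<times> real \<times> (real^3) \<Rightarrow> real) \<Rightarrow> real \<Rightarrow> real \<Rightarrow> (real^3) \<Rightarrow> real" where
  "phi_u \<phi> u R x = frechet_derivative \<phi> (at (u, R, x)) (1, 0, 0)"

definition phi_R :: "(real \<times> real \<times> (real^3) \<Rightarrow> real) \<Rightarrow> real \<Rightarrow> real \<Rightarrow> (real^3) \<Rightarrow> real" where
  "phi_R \<phi> u R x = frechet_derivative \<phi> (at (u, R, x)) (0, 1, 0)"

definition grad_x :: "(real \<times> real \<times> (real^3) \<Rightarrow> real) \<Rightarrow> real \<Rightarrow> real \<Rightarrow> (real^3) \<Rightarrow> real^3" where
  "grad_x \<phi> u R x = (\<chi> i. frechet_derivative \<phi> (at (u, R, x)) (0, 0, axis i 1))"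

text \<open>|nabla_{S^2} phi|^2 at a point x of the unit sphere: squared norm of the tangential
  projection of the gradient.\<close>
definition sph_grad_sq :: "(real \<times> real \<times> (real^3) \<Rightarrow> real) \<Rightarrow> real \<Rightarrow> real \<Rightarrow> (real^3) \<Rightarrow> real" where
  "sph_grad_sq \<phi> u R x =
     (let g = grad_x \<phi> u R x in (norm (g - (g \<bullet> x) *\<^sub>R x))\<^sup>2)"

definition energy_density ::
  "(real \<Rightarrow> real) \<Rightarrow> (real \<Rightarrow> real \<Rightarrow> real) \<Rightarrow> real \<Rightarrow> (real \<times> real \<times> (real^3) \<Rightarrow> real)
   \<Rightarrow> real \<Rightarrow> real \<Rightarrow> (real^3) \<Rightarrow> real" where
  "energy_density m \<psi> s \<phi> u R x =
     (let F = 1 - 2 * m u * R; p = \<psi> u (1 / R);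
          pu = phi_u \<phi> u R x; pR = phi_R \<phi> u R x; G = sph_grad_sq \<phi> u R x
      in u\<^sup>2 * pu\<^sup>2 + u\<^sup>2 * R\<^sup>2 * F * pu * pR
         + G * (u\<^sup>2 * F * R\<^sup>2 / (4 * s * p) * (2 + s * (p - 1)) + (1 + u * R))
         + R\<^sup>2 * F * ((2 + s * (p - 1)) / (4 * s * p) * ((2 + u * R)\<^sup>2 - 2 * m u * u\<^sup>2 * R ^ 3)
                       - (1 + u * R)) * pR\<^sup>2)"

definition I_density ::
  "(real \<times> real \<times> (real^3) \<Rightarrow> real) \<Rightarrow> real \<Rightarrow> real \<Rightarrow> (real^3) \<Rightarrow> real" where
  "I_density \<phi> u R x =
     u\<^sup>2 * (phi_u \<phi> u R x)\<^sup>2 + R / \<bar>u\<bar> * (phi_R \<phi> u R x)\<^sup>2 + sph_grad_sq \<phi> u R x"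

definition on_Hs ::
  "(real \<Rightarrow> real) \<Rightarrow> (real \<Rightarrow> real \<Rightarrow> real) \<Rightarrow> real \<Rightarrow> real \<Rightarrow> (real \<Rightarrow> real \<Rightarrow> (real^3) \<Rightarrow> real)
   \<Rightarrow> real \<times> real \<times> real \<Rightarrow> real" where
  "on_Hs m v u0 s f = (\<lambda>(u, th, vp). f u (Hs_R m v u0 s u) (sph th vp) * sin th)"

definition energy_Hs where
  "energy_Hs m \<psi> v u0 s \<phi> =
     (LINT q : Hs_param m v u0 s | lborel. on_Hs m v u0 s (energy_density m \<psi> s \<phi>) q)"

definition I_Hs where
  "I_Hs m v u0 s \<phi> = (LINT q : Hs_param m v u0 s | lborel. on_Hs m v u0 s (I_density \<phi>) q)"

end

theory Submission
  imports Defs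
begin
lemma quad_core:
  fixes x F X q :: real
  assumes x: "0 < x" "x \<le> 101/100" and X: "49/100 \<le> X" "X \<le> 51/100"
    and F: "9998/10000 \<le> F" "F \<le> 1" and q: "0 \<le> q" "q \<le> 2/10000"
  shows "F * (X * ((2 - x)^2 - q * x^2) - x * (1 - x)) - x^3 * F^2 / 3 \<ge> 1/100"
    and "F * (X * ((2 - x)^2 - q * x^2) - x * (1 - x)) + x^3 * F^2 / 2 \<le> 5"
    and "x^2 * F * (X / x) + 1 - x \<ge> 1/100"
    and "x^2 * F * (X / x) + 1 - x \<le> 5"
proof -
  define B where "B = X * ((2 - x)^2 - q * x^2) - x * (1 - x)"
  have x2: "x^2 \<le> (101/100)^2" using x by (intro power_mono) auto
  have n2: "(101/100::real)^2 = 10201/10000" by (simp add: power2_eq_square)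
  have x3: "x^3 \<le> 101/100 * x^2" using x by (simp add: power2_eq_square power3_eq_cube mult_right_mono)
  have qx: "q * x^2 \<le> 2/10000 * (101/100)^2" by (rule mult_mono) (use q x2 in auto)
  have t1: "X * (2 - x)^2 \<ge> 49/100 * (2 - x)^2" using X by (intro mult_right_mono) auto
  have t2: "X * (q * x^2) \<le> 51/100 * (2/10000 * (101/100)^2)" by (rule mult_mono) (use X qx q in auto)
  have sq: "0 \<le> x^2 - 256/100*x + 16384/10000"
    using zero_le_power2[of "x - 128/100"] by (simp add: algebra_simps power2_eq_square)
  have expB: "B = X * (2 - x)^2 - X * (q * x^2) - x + x^2" unfolding B_def by (simp add: algebra_simps power2_eq_square)
  have e2: "(2 - x)^2 = 4 - 4 * x + x^2" by (simp add: algebra_simps power2_eq_square)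
  have Bl: "B \<ge> 149/100 * x^2 - 296/100 * x + 196/100 - 2/10000"
    using t1 t2 expB e2 by (simp add: power2_eq_square)
  have sq2: "0 \<le> x^2 - 198/100*x + 9801/10000"
    using zero_le_power2[of "x - 99/100"] by (simp add: algebra_simps power2_eq_square)
  have Bpos: "B \<ge> 48/100" using Bl sq2 x by linarith
  have FB: "F * B \<ge> 9998/10000 * B" using F Bpos by (simp add: mult_right_mono)
  have F2: "F^2 \<le> 1" using F by (simp add: power_le_one)
  have x3F: "x^3 * F^2 \<le> x^3" using F2 x by (simp add: mult_left_le)
  show "F * (X * ((2 - x)^2 - q * x^2) - x * (1 - x)) - x^3 * F^2 / 3 \<ge> 1/100"
    using FB Bl sq x3 x3F x unfolding B_def[symmetric] by linarith
  have Bu: "B \<le> 51/100 * 4 + (101/100)^2"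
  proof -
    have h: "(2 - x)^2 \<le> 2^2" using x by (intro power_mono) auto
    have "X * (2 - x)^2 \<le> 51/100 * 2^2" by (rule mult_mono) (use X h in auto)
    moreover have "0 \<le> X * (q * x^2)" using X q by simp
    ultimately show ?thesis unfolding B_def using x2 x by (simp add: algebra_simps power2_eq_square)
  qed
  have "F * B \<le> B" using F Bpos by (simp add: mult_left_le_one_le)
  then show "F * (X * ((2 - x)^2 - q * x^2) - x * (1 - x)) + x^3 * F^2 / 2 \<le> 5"
  proof -
    have "x^2 \<le> 10201/10000" using x2 n2 by simp
    moreover have "B \<le> 51/100 * 4 + 10201/10000" using Bu n2 by simp
    ultimately show ?thesis using \<open>F * B \<le> B\<close> x3 x3F unfolding B_def[symmetric] by linarith
  qed
  have e: "x^2 * F * (X / x) = x * (F * X)" using x by (simp add: power2_eq_square)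
  have FX: "F * X \<ge> 9998/10000 * (49/100)" by (rule mult_mono) (use F X in auto)
  have FX2: "F * X \<le> 1 * (51/100)" by (rule mult_mono) (use F X in auto)
  have h1: "x * (F * X) \<ge> x * (9998/10000 * (49/100))" using FX x by (simp add: mult_left_mono)
  show "x^2 * F * (X / x) + 1 - x \<ge> 1/100" unfolding e using x h1 by linarith
  have h2: "x * (F * X) \<le> 101/100 * (51/100)" by (rule mult_mono) (use FX2 FX x in auto)
  show "x^2 * F * (X / x) + 1 - x \<le> 5" unfolding e using x h2 by linarith
qed


lemma pointwise:
  fixes s u R mu p pu pR G :: real
  assumes s: "0 < s" "s \<le> 1" and u: "u < 0" and R: "R > 0" and mu: "mu > 0" and G: "G \<ge> 0"
    and y: "99/100 \<le> - u * R / s" "- u * R / s \<le> 101/100"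
    and p: "1 \<le> p" "p \<le> 1001/1000"
    and q: "2 * mu * R \<le> 2/10000"
  shows "1/100 * (u\<^sup>2 * pu\<^sup>2 + R / \<bar>u\<bar> * pR\<^sup>2 + G) \<le>
      u\<^sup>2 * pu\<^sup>2 + u\<^sup>2 * R\<^sup>2 * (1 - 2 * mu * R) * pu * pR
         + G * (u\<^sup>2 * (1 - 2 * mu * R) * R\<^sup>2 / (4 * s * p) * (2 + s * (p - 1)) + (1 + u * R))
         + R\<^sup>2 * (1 - 2 * mu * R) * ((2 + s * (p - 1)) / (4 * s * p) * ((2 + u * R)\<^sup>2 - 2 * mu * u\<^sup>2 * R ^ 3)
                       - (1 + u * R)) * pR\<^sup>2
  \<and> u\<^sup>2 * pu\<^sup>2 + u\<^sup>2 * R\<^sup>2 * (1 - 2 * mu * R) * pu * pR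
         + G * (u\<^sup>2 * (1 - 2 * mu * R) * R\<^sup>2 / (4 * s * p) * (2 + s * (p - 1)) + (1 + u * R))
         + R\<^sup>2 * (1 - 2 * mu * R) * ((2 + s * (p - 1)) / (4 * s * p) * ((2 + u * R)\<^sup>2 - 2 * mu * u\<^sup>2 * R ^ 3)
                       - (1 + u * R)) * pR\<^sup>2
      \<le> 5 * (u\<^sup>2 * pu\<^sup>2 + R / \<bar>u\<bar> * pR\<^sup>2 + G)"
proof -
  define x where "x = - u * R"
  define F where "F = 1 - 2 * mu * R"
  define q where "q = 2 * mu * R"
  define A where "A = (2 + s * (p - 1)) / (4 * s * p)"
  define X where "X = x * A"
  define a where "a = u * pu"
  define b where "b = R * pR"
  define \<beta> where "\<beta> = b\<^sup>2 / x"
  define K where "K = F * (X * ((2 - x)^2 - q * x^2) - x * (1 - x))"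
  define \<Gamma> where "\<Gamma> = x^2 * F * (X / x) + 1 - x"
  have x0: "x > 0" using u R by (simp add: x_def mult_neg_pos)
  have ys: "x / s = - u * R / s" by (simp add: x_def)
  have x1: "x \<le> 101/100"
  proof -
    have "x / s \<le> 101/100" using y(2) ys by simp
    then have "x \<le> 101/100 * s" using s by (simp add: divide_le_eq)
    then show ?thesis using s by linarith
  qed
  have p0: "p > 0" using p by simp
  define w where "w = (2 + s * (p - 1)) / (4 * p)"
  have Xw: "X = (x / s) * w" using s p0 by (simp add: X_def A_def w_def field_simps)
  have n1: "s * (p - 1) \<ge> 0" using s p by simp
  have n2: "s * (p - 1) \<le> 1 * (1/1000)" using s p by (intro mult_mono) auto
  have w1: "w \<ge> 4995/10000" unfolding w_def using p0 p n1 by (simp add: le_divide_eq)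
  have w2: "w \<le> 50025/100000" unfolding w_def using p0 p n2 by (simp add: divide_le_eq)
  have X1: "X \<ge> 49/100"
  proof -
    have "(x / s) * w \<ge> 99/100 * (4995/10000)" using y ys w1 by (intro mult_mono) auto
    then show ?thesis using Xw by simp
  qed
  have X2: "X \<le> 51/100"
  proof -
    have "(x / s) * w \<le> 101/100 * (50025/100000)" using y ys w2 w1 by (intro mult_mono) auto
    then show ?thesis using Xw by simp
  qed
  have F1: "9998/10000 \<le> F" "F \<le> 1" using q mu R by (auto simp: F_def)
  have q1: "0 \<le> q" "q \<le> 2/10000" using q mu R by (auto simp: q_def)
  note core = quad_core[OF x0 x1 X1 X2 F1 q1]
  have \<beta>0: "\<beta> \<ge> 0" using x0 by (simp add: \<beta>_def)
  have Ieq: "u\<^sup>2 * pu\<^sup>2 + R / \<bar>u\<bar> * pR\<^sup>2 + G = a\<^sup>2 + \<beta> + G"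
    using u R by (simp add: a_def \<beta>_def b_def x_def field_simps power2_eq_square)
  have Eeq: "u\<^sup>2 * pu\<^sup>2 + u\<^sup>2 * R\<^sup>2 * (1 - 2 * mu * R) * pu * pR
         + G * (u\<^sup>2 * (1 - 2 * mu * R) * R\<^sup>2 / (4 * s * p) * (2 + s * (p - 1)) + (1 + u * R))
         + R\<^sup>2 * (1 - 2 * mu * R) * ((2 + s * (p - 1)) / (4 * s * p) * ((2 + u * R)\<^sup>2 - 2 * mu * u\<^sup>2 * R ^ 3)
                       - (1 + u * R)) * pR\<^sup>2
      = a\<^sup>2 - x * F * (a * b) + K * \<beta> + \<Gamma> * G"
    using x0 s p0 u unfolding K_def \<Gamma>_def \<beta>_def X_def A_def F_def q_def a_def b_def x_def
    by (simp add: field_simps power2_eq_square power3_eq_cube)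
  have sq1: "0 \<le> (3 * a - 2 * x * F * b)\<^sup>2" by simp
  have sq2: "0 \<le> (a + x * F * b)\<^sup>2" by simp
  have bb: "x\<^sup>2 * F\<^sup>2 * b\<^sup>2 = x^3 * F^2 * \<beta>" using x0 by (simp add: \<beta>_def power2_eq_square power3_eq_cube)
  have L1: "x * F * (a * b) \<le> 3/4 * a\<^sup>2 + x^3 * F^2 * \<beta> / 3"
  proof -
    have e1: "(3 * a - 2 * x * F * b)\<^sup>2 = 9 * a\<^sup>2 - 12 * (x * F * (a * b)) + 4 * (x\<^sup>2 * F\<^sup>2 * b\<^sup>2)"
      by (simp add: power2_eq_square algebra_simps)
    show ?thesis using sq1 e1 bb by linarith
  qed
  have L2: "- (x * F * (a * b)) \<le> 1/2 * a\<^sup>2 + x^3 * F^2 * \<beta> / 2"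
  proof -
    have e1: "(a + x * F * b)\<^sup>2 = a\<^sup>2 + 2 * (x * F * (a * b)) + (x\<^sup>2 * F\<^sup>2 * b\<^sup>2)"
      by (simp add: power2_eq_square algebra_simps)
    show ?thesis using sq2 e1 bb by linarith
  qed
  have K1: "(K - x^3 * F^2 / 3) * \<beta> \<ge> 1/100 * \<beta>"
    using core(1) \<beta>0 unfolding K_def by (intro mult_right_mono) auto
  have K2: "(K + x^3 * F^2 / 2) * \<beta> \<le> 5 * \<beta>"
    using core(2) \<beta>0 unfolding K_def by (intro mult_right_mono) auto
  have G1: "\<Gamma> * G \<ge> 1/100 * G" using core(3) G unfolding \<Gamma>_def by (intro mult_right_mono) auto
  have G2: "\<Gamma> * G \<le> 5 * G" using core(4) G unfolding \<Gamma>_def by (intro mult_right_mono) auto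
  have a0: "a\<^sup>2 \<ge> 0" by simp
  have d1: "(K - x^3 * F^2 / 3) * \<beta> = K * \<beta> - x^3 * F^2 * \<beta> / 3" by (simp add: algebra_simps)
  have d2: "(K + x^3 * F^2 / 2) * \<beta> = K * \<beta> + x^3 * F^2 * \<beta> / 2" by (simp add: algebra_simps)
  show ?thesis unfolding Ieq Eeq
  proof (rule conjI)
    show "1/100 * (a\<^sup>2 + \<beta> + G) \<le> a\<^sup>2 - x * F * (a * b) + K * \<beta> + \<Gamma> * G"
      using L1 K1 G1 a0 d1 \<beta>0 G apply (simp add: field_simps) using zero_le_power2[of a] by linarith
    show "a\<^sup>2 - x * F * (a * b) + K * \<beta> + \<Gamma> * G \<le> 5 * (a\<^sup>2 + \<beta> + G)"
      using L2 K2 G2 a0 d2 \<beta>0 G apply (simp add: field_simps) using zero_le_power2[of a] by linarith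
  qed
qed


lemma sph_comp: "sph th vp $ i = (if i = 1 then sin th * cos vp else if i = 2 then sin th * sin vp else cos th)"
  using exhaust_3[of i] by (auto simp: sph_def)

lemma sph_norm: "norm (sph th vp) = 1"
proof -
  have a: "(sin th)\<^sup>2 * (cos vp)\<^sup>2 + (sin th)\<^sup>2 * (sin vp)\<^sup>2 = (sin th)\<^sup>2 * ((sin vp)\<^sup>2 + (cos vp)\<^sup>2)"
    by algebra
  have b: "(sin th)\<^sup>2 * (cos vp)\<^sup>2 + (sin th)\<^sup>2 * (sin vp)\<^sup>2 + (cos th)\<^sup>2 = 1"
    by (simp only: a sin_cos_squared_add mult_1_right)
  show ?thesis unfolding norm_vec_def L2_set_def sum_3 by (simp add: sph_def power_mult_distrib b)
qed

lemma sph_cont: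
  fixes f g :: "'a::t2_space \<Rightarrow> real"
  shows "continuous_on A f \<Longrightarrow> continuous_on A g \<Longrightarrow> continuous_on A (\<lambda>q. sph (f q) (g q))"
proof -
  assume f: "continuous_on A f" and g: "continuous_on A g"
  have e: "sph (f q) (g q) = (\<chi> i. if i = 1 then sin (f q) * cos (g q) else if i = 2 then sin (f q) * sin (g q) else cos (f q))" for q
    by (simp add: vec_eq_iff sph_comp)
  show ?thesis unfolding e
  proof (intro continuous_on_vec_lambda)
    fix i :: 3
    show "continuous_on A (\<lambda>q. if i = 1 then sin (f q) * cos (g q) else if i = 2 then sin (f q) * sin (g q) else cos (f q))"
      by (cases "i = 1"; cases "i = 2") (auto intro!: continuous_on_mult continuous_on_sin[OF f] continuous_on_cos[OF g] continuous_on_sin[OF g] continuous_on_cos[OF f])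
  qed
qed

lemma basis_elems:
  "((1::real), (0::real), (0::real^3)) \<in> Basis"
  "((0::real), (1::real), (0::real^3)) \<in> Basis"
  "((0::real), (0::real), axis i (1::real)) \<in> Basis"
  by (auto simp: Basis_prod_def zero_prod_def)

lemma smooth_deriv_cont:
  assumes "smooth_on S \<phi>" "e \<in> Basis"
  shows "continuous_on S (\<lambda>z. frechet_derivative \<phi> (at z) e)"
proof -
  have "Ck_on (Suc 0) S \<phi>" using assms(1) unfolding smooth_on_def by blast
  then show ?thesis using assms(2) by simp
qed

locale vaidya =
  fixes m :: "real \<Rightarrow> real" and \<psi> v :: "real \<Rightarrow> real \<Rightarrow> real"
  assumes m_smooth: "smooth_on UNIV m"
    and m_nonincr: "\<And>a b. a \<le> b \<Longrightarrow> m b \<le> m a"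
    and m_pos: "\<And>u. m u > 0"
    and m_bdd: "bounded (range m)"
    and psi_pos: "\<And>u r. (u, r) \<in> exterior m \<Longrightarrow> \<psi> u r > 0"
    and psi_eq: "\<And>u r. (u, r) \<in> exterior m \<Longrightarrow>
        \<exists>D. ((\<lambda>(a, b). \<psi> a b) has_derivative D) (at (u, r)) \<and>
            D (1, - Fr m u r / 2) + 2 * deriv m u / (Fr m u r * r) * \<psi> u r = 0"
    and psi_scri: "\<And>\<rho> \<tau>0. (\<forall>\<tau>\<le>\<tau>0. (\<tau>, \<rho> \<tau>) \<in> exterior m \<and>
                     (\<rho> has_real_derivative (- Fr m \<tau> (\<rho> \<tau>) / 2)) (at \<tau>))
        \<Longrightarrow> ((\<lambda>\<tau>. \<psi> \<tau> (\<rho> \<tau>)) \<longlongrightarrow> 1) at_bot"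
    and v_diff: "\<And>u r. (u, r) \<in> exterior m \<Longrightarrow>
        ((\<lambda>(a, b). v a b) has_derivative
           (\<lambda>(du, dr). \<psi> u r * du + 2 * \<psi> u r / Fr m u r * dr)) (at (u, r))"
begin

lemma ext_iff: "(u, r) \<in> exterior m \<longleftrightarrow> r > 2 * m u"
  by (simp add: exterior_def)

definition "MM = (SOME M. M \<ge> 1 \<and> (\<forall>u. m u \<le> M))"

lemma MM: "MM \<ge> 1" "m u \<le> MM"
proof -
  obtain B where B: "\<forall>x\<in>range m. norm x \<le> B" using m_bdd bounded_iff by blast
  have "\<exists>M. M \<ge> 1 \<and> (\<forall>u. m u \<le> M)"
  proof (rule exI[of _ "max 1 B"], intro conjI allI)
    fix u have "norm (m u) \<le> B" using B by auto
    then show "m u \<le> max 1 B" by auto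
  qed auto
  then have "MM \<ge> 1 \<and> (\<forall>u. m u \<le> MM)" unfolding MM_def by (rule someI_ex)
  then show "MM \<ge> 1" "m u \<le> MM" by auto
qed

lemma ext_big: "r > 2 * MM \<Longrightarrow> (u, r) \<in> exterior m"
  using MM(2)[of u] by (simp add: ext_iff)

lemma Fr_pos: "(u, r) \<in> exterior m \<Longrightarrow> Fr m u r > 0"
  using m_pos[of u] by (simp add: ext_iff Fr_def field_simps)

lemma Fr_le1: "(u, r) \<in> exterior m \<Longrightarrow> Fr m u r \<le> 1"
  using m_pos[of u] by (simp add: ext_iff Fr_def field_simps)

lemma m_deriv: "(m has_real_derivative deriv m u) (at u)"
proof -
  have "Ck_on (Suc 0) UNIV m" using m_smooth unfolding smooth_on_def by blast
  then have "m differentiable (at u)" by simp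
  then show ?thesis using DERIV_deriv_iff_real_differentiable by blast
qed

lemma m_deriv_nonpos: "deriv m u \<le> 0"
proof (rule ccontr)
  assume "\<not> deriv m u \<le> 0"
  then have "deriv m u > 0" by simp
  from DERIV_pos_inc_right[OF m_deriv this] obtain d where "d > 0" "\<forall>h>0. h < d \<longrightarrow> m u < m (u + h)"
    by blast
  then have "m u < m (u + d/2)" by auto
  moreover have "m (u + d/2) \<le> m u" using m_nonincr \<open>d>0\<close> by auto
  ultimately show False by simp
qed

lemma m_cont: "continuous_on A m"
  by (intro continuous_at_imp_continuous_on ballI DERIV_isCont[OF m_deriv])

lemma v_line:
  assumes "(\<tau>, a + b * \<tau>) \<in> exterior m"
  shows "((\<lambda>t. v t (a + b * t)) has_real_derivative
     (\<psi> \<tau> (a + b * \<tau>) + b * (2 * \<psi> \<tau> (a + b * \<tau>) / Fr m \<tau> (a + b * \<tau>)))) (at \<tau>)"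
proof -
  have 1: "((\<lambda>t. (t, a + b * t)) has_derivative (\<lambda>h. (h, b * h))) (at \<tau>)"
    by (auto intro!: derivative_eq_intros)
  have 2: "((\<lambda>t. (\<lambda>(x, y). v x y) (t, a + b * t)) has_derivative
      (\<lambda>h. (\<lambda>(du, dr). \<psi> \<tau> (a + b * \<tau>) * du + 2 * \<psi> \<tau> (a + b * \<tau>) / Fr m \<tau> (a + b * \<tau>) * dr) (h, b * h))) (at \<tau>)"
    by (rule has_derivative_compose[OF 1 v_diff[OF assms]])
  have 3: "((\<lambda>t. v t (a + b * t)) has_derivative (\<lambda>h. \<psi> \<tau> (a + b * \<tau>) * h + 2 * \<psi> \<tau> (a + b * \<tau>) / Fr m \<tau> (a + b * \<tau>) * (b * h))) (at \<tau>)"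
    using 2 by simp
  show ?thesis unfolding has_field_derivative_def
    by (rule has_derivative_eq_rhs[OF 3]) (auto simp: fun_eq_iff algebra_simps)
qed

lemma v_r:
  assumes "(u, r) \<in> exterior m"
  shows "((\<lambda>x. v u x) has_real_derivative (2 * \<psi> u r / Fr m u r)) (at r)"
proof -
  have 1: "((\<lambda>t. (u, t)) has_derivative (\<lambda>h. (0, h))) (at r)"
    by (auto intro!: derivative_eq_intros)
  have 2: "((\<lambda>t. (\<lambda>(x, y). v x y) (u, t)) has_derivative
      (\<lambda>h. (\<lambda>(du, dr). \<psi> u r * du + 2 * \<psi> u r / Fr m u r * dr) (0, h))) (at r)"
    by (rule has_derivative_compose[OF 1 v_diff[OF assms]])
  have 3: "((\<lambda>t. v u t) has_derivative (\<lambda>h. 2 * \<psi> u r / Fr m u r * h)) (at r)"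
    using 2 by simp
  show ?thesis unfolding has_field_derivative_def
    by (rule has_derivative_eq_rhs[OF 3]) (auto simp: fun_eq_iff algebra_simps)
qed


lemma v_u:
  assumes "r > 2 * MM"
  shows "((\<lambda>t. v t r) has_real_derivative \<psi> \<tau> r) (at \<tau>)"
  using v_line[of \<tau> r 0] ext_big[OF assms, of \<tau>] by simp

lemma v_r_strict:
  assumes "2 * m u < a" "a < b"
  shows "v u a < v u b"
proof (rule DERIV_pos_imp_increasing[OF assms(2)])
  fix x assume "a \<le> x" "x \<le> b"
  then have ex: "(u, x) \<in> exterior m" using assms by (simp add: ext_iff)
  show "\<exists>y. ((\<lambda>x. v u x) has_real_derivative y) (at x) \<and> 0 < y"
    using v_r[OF ex] psi_pos[OF ex] Fr_pos[OF ex] by (intro exI[of _ "2 * \<psi> u x / Fr m u x"] conjI) auto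
qed

lemma v_r_mono: "2 * m u < a \<Longrightarrow> a \<le> b \<Longrightarrow> v u a \<le> v u b"
  using v_r_strict[of u a b] by (cases "a = b") auto

lemma v_r_inj: "2 * m u < a \<Longrightarrow> 2 * m u < b \<Longrightarrow> v u a = v u b \<Longrightarrow> a = b"
  using v_r_strict[of u a b] v_r_strict[of u b a] by (cases a b rule: linorder_cases) auto

lemma v_u_strict:
  assumes "2 * MM < r" "a < b"
  shows "v a r < v b r"
proof (rule DERIV_pos_imp_increasing[OF assms(2)])
  fix x assume "a \<le> x" "x \<le> b"
  have ex: "(x, r) \<in> exterior m" using ext_big assms by blast
  show "\<exists>y. ((\<lambda>t. v t r) has_real_derivative y) (at x) \<and> 0 < y"
    using v_u[OF assms(1)] psi_pos[OF ex] by (intro exI conjI) auto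
qed

lemma v_u_mono: "2 * MM < r \<Longrightarrow> a \<le> b \<Longrightarrow> v a r \<le> v b r"
  using v_u_strict[of r a b] by (cases "a = b") auto

lemma v_line_nonincr:
  assumes "a \<le> b" "\<And>t. a \<le> t \<Longrightarrow> t \<le> b \<Longrightarrow> 2 * MM < c0 - t / 2"
  shows "v b (c0 - b / 2) \<le> v a (c0 - a / 2)"
proof -
  have "(\<lambda>t. v t (c0 + (-1/2) * t)) b \<le> (\<lambda>t. v t (c0 + (-1/2) * t)) a"
  proof (rule DERIV_nonpos_imp_nonincreasing[OF assms(1)])
    fix x assume x: "a \<le> x" "x \<le> b"
    have ex: "(x, c0 + (-1/2) * x) \<in> exterior m" using ext_big assms(2)[OF x] by simp
    have "\<psi> x (c0 + (-1/2) * x) + (-1/2) * (2 * \<psi> x (c0 + (-1/2) * x) / Fr m x (c0 + (-1/2) * x)) \<le> 0"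
    proof -
      have p: "\<psi> x (c0 + (-1/2) * x) > 0" by (rule psi_pos[OF ex])
      have f: "Fr m x (c0 + (-1/2) * x) > 0" "Fr m x (c0 + (-1/2) * x) \<le> 1"
        using Fr_pos[OF ex] Fr_le1[OF ex] by auto
      have "\<psi> x (c0 + (-1/2) * x) \<le> \<psi> x (c0 + (-1/2) * x) / Fr m x (c0 + (-1/2) * x)"
        using p f by (simp add: le_divide_eq)
      then show ?thesis by simp
    qed
    then show "\<exists>y. ((\<lambda>t. v t (c0 + (-1/2) * t)) has_real_derivative y) (at x) \<and> y \<le> 0"
      using v_line[OF ex] by blast
  qed
  then show ?thesis by simp
qed

lemma v_r_cont: "2 * m u < a \<Longrightarrow> continuous_on {a..b} (v u)"
proof (intro continuous_at_imp_continuous_on ballI)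
  fix x assume "2 * m u < a" "x \<in> {a..b}"
  then have ex: "(u, x) \<in> exterior m" by (simp add: ext_iff)
  show "isCont (v u) x" using DERIV_isCont[OF v_r[OF ex]] .
qed

definition chr :: "real \<Rightarrow> real \<Rightarrow> real \<Rightarrow> real" where
  "chr u1 r1 \<tau> = (THE r. 2 * MM < r \<and> v \<tau> r = v u1 r1)"

lemma chr_ex:
  assumes r1: "r1 \<ge> 4 * MM + 1" and t: "\<tau> \<le> u1 + 1"
  shows "\<exists>r. 2 * MM < r \<and> v \<tau> r = v u1 r1 \<and> (\<tau> \<le> u1 \<longrightarrow> r1 \<le> r)"
proof (cases "\<tau> \<le> u1")
  case True
  define c0 where "c0 = r1 + u1 / 2"
  have M1: "MM \<ge> 1" by (rule MM)
  have "v \<tau> r1 \<le> v u1 r1" using v_u_mono[of r1 \<tau> u1] True r1 M1 by simp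
  moreover have "v u1 (c0 - u1 / 2) \<le> v \<tau> (c0 - \<tau> / 2)"
    by (rule v_line_nonincr[OF True]) (use r1 M1 in \<open>auto simp: c0_def\<close>)
  moreover have "c0 - u1 / 2 = r1" by (simp add: c0_def)
  moreover have "r1 \<le> c0 - \<tau> / 2" using True by (simp add: c0_def)
  moreover have "2 * m \<tau> < r1" using MM(2)[of \<tau>] r1 M1 by simp
  ultimately obtain r where "r1 \<le> r" "r \<le> c0 - \<tau> / 2" "v \<tau> r = v u1 r1"
    using IVT'[of "v \<tau>" r1 "v u1 r1" "c0 - \<tau> / 2"] v_r_cont[of \<tau> r1 "c0 - \<tau> / 2"] by auto
  then show ?thesis using r1 M1 True by (intro exI[of _ r]) auto
next
  case False
  define c0 where "c0 = r1 + u1 / 2"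
  have M1: "MM \<ge> 1" by (rule MM)
  have "v u1 r1 \<le> v \<tau> r1" using v_u_mono[of r1 u1 \<tau>] False r1 M1 by simp
  moreover have "v \<tau> (c0 - \<tau> / 2) \<le> v u1 (c0 - u1 / 2)"
    by (rule v_line_nonincr) (use r1 M1 False t in \<open>auto simp: c0_def\<close>)
  moreover have "c0 - u1 / 2 = r1" by (simp add: c0_def)
  moreover have "c0 - \<tau> / 2 \<le> r1" using False by (simp add: c0_def)
  moreover have "2 * m \<tau> < c0 - \<tau> / 2" using MM(2)[of \<tau>] r1 M1 t by (simp add: c0_def)
  ultimately obtain r where "c0 - \<tau> / 2 \<le> r" "r \<le> r1" "v \<tau> r = v u1 r1"
    using IVT'[of "v \<tau>" "c0 - \<tau> / 2" "v u1 r1" r1] v_r_cont[of \<tau> "c0 - \<tau> / 2" r1] by auto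
  moreover have "2 * MM < c0 - \<tau> / 2" using r1 M1 t by (simp add: c0_def)
  ultimately show ?thesis using False by (intro exI[of _ r]) auto
qed

lemma chr_uniq: "2 * MM < a \<Longrightarrow> 2 * MM < b \<Longrightarrow> v \<tau> a = v \<tau> b \<Longrightarrow> a = b"
  using v_r_inj[of \<tau> a b] MM(2)[of \<tau>] by simp

lemma chr:
  assumes r1: "r1 \<ge> 4 * MM + 1" and t: "\<tau> \<le> u1 + 1"
  shows "2 * MM < chr u1 r1 \<tau> \<and> v \<tau> (chr u1 r1 \<tau>) = v u1 r1 \<and> (\<tau> \<le> u1 \<longrightarrow> r1 \<le> chr u1 r1 \<tau>)"
proof -
  obtain r where r: "2 * MM < r" "v \<tau> r = v u1 r1" "\<tau> \<le> u1 \<longrightarrow> r1 \<le> r"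
    using chr_ex[OF r1 t] by blast
  have "chr u1 r1 \<tau> = r" unfolding chr_def
  proof (rule the_equality)
    fix y assume "2 * MM < y \<and> v \<tau> y = v u1 r1"
    then show "y = r" using r by (intro chr_uniq[of y r \<tau>]) auto
  qed (use r in auto)
  then show ?thesis using r by simp
qed

lemma chr_u1: "r1 \<ge> 4 * MM + 1 \<Longrightarrow> chr u1 r1 u1 = r1"
  unfolding chr_def using MM(1) by (intro the_equality) (auto intro: chr_uniq)

lemma chr_cmp:
  assumes r1: "r1 \<ge> 4 * MM + 1" and tt: "\<tau> < \<tau>'" "\<tau>' \<le> u1 + 1"
  shows "chr u1 r1 \<tau>' \<le> chr u1 r1 \<tau> \<and> chr u1 r1 \<tau> \<le> chr u1 r1 \<tau>' + (\<tau>' - \<tau>) / 2"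
proof -
  let ?a = "chr u1 r1 \<tau>" and ?b = "chr u1 r1 \<tau>'"
  have A: "2 * MM < ?a" "v \<tau> ?a = v u1 r1" using chr[OF r1, of \<tau>] tt by auto
  have B: "2 * MM < ?b" "v \<tau>' ?b = v u1 r1" using chr[OF r1, of \<tau>'] tt by auto
  have 1: "v \<tau> ?b < v \<tau>' ?b" by (rule v_u_strict[OF B(1) tt(1)])
  have "?b \<le> ?a"
  proof (rule ccontr)
    assume "\<not> ?b \<le> ?a"
    then have "v \<tau> ?a < v \<tau> ?b" using v_r_strict[of \<tau> ?a ?b] A MM(2)[of \<tau>] by simp
    then show False using 1 A B by simp
  qed
  moreover have "?a \<le> ?b + (\<tau>' - \<tau>) / 2"
  proof (rule ccontr)
    assume c: "\<not> ?a \<le> ?b + (\<tau>' - \<tau>) / 2"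
    define c0 where "c0 = ?b + \<tau>' / 2"
    have "v \<tau>' (c0 - \<tau>' / 2) \<le> v \<tau> (c0 - \<tau> / 2)"
      by (rule v_line_nonincr) (use tt B in \<open>auto simp: c0_def\<close>)
    moreover have "c0 - \<tau>' / 2 = ?b" by (simp add: c0_def)
    moreover have "v \<tau> (c0 - \<tau> / 2) < v \<tau> ?a"
      by (rule v_r_strict) (use c B tt MM(2)[of \<tau>] in \<open>auto simp: c0_def diff_divide_distrib\<close>)
    ultimately show False using A B by simp
  qed
  ultimately show ?thesis by simp
qed

lemma chr_lip:
  assumes r1: "r1 \<ge> 4 * MM + 1" and y: "y \<le> u1 + 1" and t: "\<tau> \<le> u1 + 1"
  shows "\<bar>chr u1 r1 y - chr u1 r1 \<tau>\<bar> \<le> \<bar>y - \<tau>\<bar> / 2"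
proof (cases y \<tau> rule: linorder_cases)
  case less
  have "chr u1 r1 y \<le> chr u1 r1 \<tau> + (\<tau> - y) / 2" "chr u1 r1 \<tau> \<le> chr u1 r1 y"
    using chr_cmp[OF r1 less t] by auto
  then show ?thesis using less by (simp add: abs_if field_simps)
next
  case greater
  have "chr u1 r1 \<tau> \<le> chr u1 r1 y + (y - \<tau>) / 2" "chr u1 r1 y \<le> chr u1 r1 \<tau>"
    using chr_cmp[OF r1 greater y] by auto
  then show ?thesis using greater by (simp add: abs_if field_simps)
qed simp

lemma chr_deriv:
  assumes r1: "r1 \<ge> 4 * MM + 1" and t: "\<tau> < u1 + 1"
  shows "(chr u1 r1 has_real_derivative (- Fr m \<tau> (chr u1 r1 \<tau>) / 2)) (at \<tau>)"
proof -
  define \<rho> where "\<rho> = chr u1 r1"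
  define P where "P = \<psi> \<tau> (\<rho> \<tau>)"
  define F where "F = Fr m \<tau> (\<rho> \<tau>)"
  have c\<tau>: "2 * MM < \<rho> \<tau>" "v \<tau> (\<rho> \<tau>) = v u1 r1" using chr[OF r1, of \<tau>] t by (auto simp: \<rho>_def)
  have ex: "(\<tau>, \<rho> \<tau>) \<in> exterior m" using ext_big c\<tau> by blast
  have P: "P > 0" using psi_pos[OF ex] by (simp add: P_def)
  have F: "F > 0" using Fr_pos[OF ex] by (simp add: F_def)
  have hd: "\<forall>e>0. \<exists>d>0. \<forall>y. norm (y - (\<tau>, \<rho> \<tau>)) < d \<longrightarrow>
      norm ((\<lambda>(a, b). v a b) y - (\<lambda>(a, b). v a b) (\<tau>, \<rho> \<tau>) -
        (\<lambda>(du, dr). P * du + 2 * P / F * dr) (y - (\<tau>, \<rho> \<tau>))) \<le> e * norm (y - (\<tau>, \<rho> \<tau>))"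
    using v_diff[OF ex] unfolding has_derivative_at_alt P_def F_def by blast
  have "(\<rho> has_derivative (\<lambda>h. h * (- F / 2))) (at \<tau>)"
    unfolding has_derivative_at_alt
  proof (intro conjI allI impI)
    show "bounded_linear (\<lambda>h. h * (- F / 2))" by (rule bounded_linear_mult_left)
    fix e :: real assume e: "e > 0"
    define e' where "e' = 4 * e * P / (3 * F)"
    have e': "e' > 0" using e P F by (simp add: e'_def)
    obtain d0 where d0: "d0 > 0" and H: "\<And>y. norm (y - (\<tau>, \<rho> \<tau>)) < d0 \<Longrightarrow>
      norm ((\<lambda>(a, b). v a b) y - (\<lambda>(a, b). v a b) (\<tau>, \<rho> \<tau>) -
        (\<lambda>(du, dr). P * du + 2 * P / F * dr) (y - (\<tau>, \<rho> \<tau>))) \<le> e' * norm (y - (\<tau>, \<rho> \<tau>))"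
      using hd e' by blast
    define d where "d = min (2 * d0 / 3) (u1 + 1 - \<tau>)"
    have d: "d > 0" using d0 t by (simp add: d_def)
    show "\<exists>d>0. \<forall>y. norm (y - \<tau>) < d \<longrightarrow> norm (\<rho> y - \<rho> \<tau> - (y - \<tau>) * (- F / 2)) \<le> e * norm (y - \<tau>)"
    proof (intro exI[of _ d] conjI allI impI d)
      fix y assume y: "norm (y - \<tau>) < d"
      define h where "h = y - \<tau>"
      define k where "k = \<rho> y - \<rho> \<tau>"
      have yb: "y \<le> u1 + 1" using y by (auto simp: d_def)
      have k: "\<bar>k\<bar> \<le> \<bar>h\<bar> / 2" using chr_lip[OF r1 yb] t by (simp add: k_def h_def \<rho>_def)
      have cy: "v y (\<rho> y) = v u1 r1" using chr[OF r1 yb] by (simp add: \<rho>_def)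
      have diffp: "(y, \<rho> y) - (\<tau>, \<rho> \<tau>) = (h, k)" by (simp add: h_def k_def)
      have nhk: "norm (h, k) \<le> 3 / 2 * \<bar>h\<bar>" using norm_Pair_le[of h k] k by simp
      have "3 / 2 * \<bar>h\<bar> < d0" using y by (simp add: h_def d_def)
      then have "norm ((y, \<rho> y) - (\<tau>, \<rho> \<tau>)) < d0" using nhk diffp by simp
      from H[OF this] have "\<bar>P * h + 2 * P / F * k\<bar> \<le> e' * norm (h, k)"
        using cy c\<tau> diffp by simp
      also have "\<dots> \<le> e' * (3 / 2 * \<bar>h\<bar>)" using nhk e' by (simp add: mult_left_mono)
      also have "e' * (3 / 2 * \<bar>h\<bar>) = (2 * P / F) * (e * \<bar>h\<bar>)"
        using F by (simp add: e'_def field_simps)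
      finally have 1: "\<bar>P * h + 2 * P / F * k\<bar> \<le> (2 * P / F) * (e * \<bar>h\<bar>)" .
      have "P * h + 2 * P / F * k = (2 * P / F) * (k + F * h / 2)"
        using F by (simp add: field_simps)
      then have "\<bar>P * h + 2 * P / F * k\<bar> = (2 * P / F) * \<bar>k + F * h / 2\<bar>"
        using P F by (simp add: abs_mult)
      with 1 have "(2 * P / F) * \<bar>k + F * h / 2\<bar> \<le> (2 * P / F) * (e * \<bar>h\<bar>)" by linarith
      moreover have "2 * P / F > 0" using P F by simp
      ultimately have "\<bar>k + F * h / 2\<bar> \<le> e * \<bar>h\<bar>"
        by (rule mult_left_le_imp_le)
      then show "norm (\<rho> y - \<rho> \<tau> - (y - \<tau>) * (- F / 2)) \<le> e * norm (y - \<tau>)"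
        by (simp add: h_def k_def algebra_simps)
    qed
  qed
  then show ?thesis unfolding has_field_derivative_def \<rho>_def F_def
    by (rule has_derivative_eq_rhs) (auto simp: fun_eq_iff)
qed

lemma psi_bounds:
  assumes r1: "r1 \<ge> 4 * MM + 1"
  shows "1 \<le> \<psi> u1 r1 \<and> \<psi> u1 r1 \<le> exp (4 * MM / r1)"
proof -
  define \<rho> where "\<rho> = chr u1 r1"
  define g where "g \<tau> = \<psi> \<tau> (\<rho> \<tau>)" for \<tau>
  define \<gamma> where "\<gamma> \<tau> = - (2 * deriv m \<tau> / (Fr m \<tau> (\<rho> \<tau>) * \<rho> \<tau>))" for \<tau>
  have M1: "MM \<ge> 1" by (rule MM)
  have c\<tau>: "r1 \<le> \<rho> \<tau>" "2 * MM < \<rho> \<tau>" if "\<tau> \<le> u1" for \<tau>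
    using chr[OF r1, of \<tau>] that by (auto simp: \<rho>_def)
  have ex: "(\<tau>, \<rho> \<tau>) \<in> exterior m" if "\<tau> \<le> u1" for \<tau> using ext_big c\<tau>[OF that] by blast
  have rd: "(\<rho> has_real_derivative - Fr m \<tau> (\<rho> \<tau>) / 2) (at \<tau>)" if "\<tau> \<le> u1" for \<tau>
    using chr_deriv[OF r1, of \<tau>] that by (simp add: \<rho>_def)
  have gpos: "g \<tau> > 0" if "\<tau> \<le> u1" for \<tau> using psi_pos[OF ex[OF that]] by (simp add: g_def)
  have gd: "(g has_real_derivative (\<gamma> \<tau> * g \<tau>)) (at \<tau>)" if t: "\<tau> \<le> u1" for \<tau>
  proof -
    obtain D where D: "((\<lambda>(a, b). \<psi> a b) has_derivative D) (at (\<tau>, \<rho> \<tau>))"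
      and eq: "D (1, - Fr m \<tau> (\<rho> \<tau>) / 2) + 2 * deriv m \<tau> / (Fr m \<tau> (\<rho> \<tau>) * \<rho> \<tau>) * \<psi> \<tau> (\<rho> \<tau>) = 0"
      using psi_eq[OF ex[OF t]] by blast
    have rd': "(\<rho> has_derivative (\<lambda>h. (- Fr m \<tau> (\<rho> \<tau>) / 2) * h)) (at \<tau>)"
      using rd[OF t] unfolding has_field_derivative_def by (rule has_derivative_eq_rhs) (auto simp: fun_eq_iff)
    have inner: "((\<lambda>t. (t, \<rho> t)) has_derivative (\<lambda>h. (h, (- Fr m \<tau> (\<rho> \<tau>) / 2) * h))) (at \<tau>)"
      by (rule has_derivative_Pair[OF has_derivative_ident rd'])
    have comp: "((\<lambda>t. (\<lambda>(a, b). \<psi> a b) (t, \<rho> t)) has_derivative (\<lambda>h. D (h, (- Fr m \<tau> (\<rho> \<tau>) / 2) * h))) (at \<tau>)"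
      by (rule has_derivative_compose[OF inner D])
    have lin: "linear D" using D has_derivative_linear by blast
    have "D (h, (- Fr m \<tau> (\<rho> \<tau>) / 2) * h) = h * D (1, - Fr m \<tau> (\<rho> \<tau>) / 2)" for h
    proof -
      have e: "(h, (- Fr m \<tau> (\<rho> \<tau>) / 2) * h) = h *\<^sub>R (1, - Fr m \<tau> (\<rho> \<tau>) / 2)" by simp
      have "D (h *\<^sub>R (1, - Fr m \<tau> (\<rho> \<tau>) / 2)) = h * D (1, - Fr m \<tau> (\<rho> \<tau>) / 2)"
        using linear_scale[OF lin, of h "(1, - Fr m \<tau> (\<rho> \<tau>) / 2)"] by simp
      then show ?thesis by (simp only: e)
    qed
    moreover have "D (1, - Fr m \<tau> (\<rho> \<tau>) / 2) = \<gamma> \<tau> * g \<tau>"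
      using eq by (simp add: \<gamma>_def g_def)
    ultimately have "((\<lambda>t. \<psi> t (\<rho> t)) has_derivative (\<lambda>h. h * (\<gamma> \<tau> * g \<tau>))) (at \<tau>)"
      using comp by simp
    then show ?thesis unfolding has_field_derivative_def g_def
      by (rule has_derivative_eq_rhs) (auto simp: fun_eq_iff)
  qed
  have lgd: "((\<lambda>t. ln (g t)) has_real_derivative \<gamma> \<tau>) (at \<tau>)" if t: "\<tau> \<le> u1" for \<tau>
  proof -
    have "((\<lambda>t. ln (g t)) has_real_derivative inverse (g \<tau>) * (\<gamma> \<tau> * g \<tau>)) (at \<tau>)"
      by (rule DERIV_chain2[OF DERIV_ln[OF gpos[OF t]] gd[OF t]])
    then show ?thesis using gpos[OF t] by (simp add: field_simps)
  qed
  have Fr_eq: "Fr m \<tau> (\<rho> \<tau>) * \<rho> \<tau> = \<rho> \<tau> - 2 * m \<tau>" if t: "\<tau> \<le> u1" for \<tau>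
    using c\<tau>[OF t] M1 by (simp add: Fr_def field_simps)
  have g0: "\<gamma> \<tau> \<ge> 0" if t: "\<tau> \<le> u1" for \<tau>
  proof -
    have "\<rho> \<tau> - 2 * m \<tau> > 0" using c\<tau>[OF t] MM(2)[of \<tau>] by simp
    then show ?thesis using m_deriv_nonpos[of \<tau>] Fr_eq[OF t] unfolding \<gamma>_def
      by (simp add: divide_nonpos_pos)
  qed
  have g1: "\<gamma> \<tau> \<le> - 4 * deriv m \<tau> / r1" if t: "\<tau> \<le> u1" for \<tau>
  proof -
    have a: "r1 / 2 \<le> \<rho> \<tau> - 2 * m \<tau>" using c\<tau>[OF t] MM(2)[of \<tau>] r1 by simp
    have b: "0 \<le> - 2 * deriv m \<tau>" using m_deriv_nonpos[of \<tau>] by simp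
    have "(- 2 * deriv m \<tau>) / (\<rho> \<tau> - 2 * m \<tau>) \<le> (- 2 * deriv m \<tau>) / (r1 / 2)"
      by (rule divide_left_mono[OF a b]) (use a r1 M1 in auto)
    moreover have "(- 2 * deriv m \<tau>) / (r1 / 2) = - 4 * deriv m \<tau> / r1" by simp
    moreover have "- (2 * deriv m \<tau> / (\<rho> \<tau> - 2 * m \<tau>)) = (- 2 * deriv m \<tau>) / (\<rho> \<tau> - 2 * m \<tau>)" by simp
    ultimately show ?thesis unfolding \<gamma>_def Fr_eq[OF t] by metis
  qed
  have mono1: "ln (g \<tau>) \<le> ln (g u1)" if t: "\<tau> \<le> u1" for \<tau>
    by (rule DERIV_nonneg_imp_nondecreasing[OF t]) (use lgd g0 in auto)
  have mono2: "ln (g u1) + 4 * m u1 / r1 \<le> ln (g \<tau>) + 4 * m \<tau> / r1" if t: "\<tau> \<le> u1" for \<tau>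
  proof (rule DERIV_nonpos_imp_nonincreasing[OF t, of "\<lambda>t. ln (g t) + 4 * m t / r1", simplified])
    fix x assume x: "\<tau> \<le> x" "x \<le> u1"
    have "((\<lambda>t. ln (g t) + 4 * m t / r1) has_real_derivative (\<gamma> x + 4 * deriv m x / r1)) (at x)"
      by (rule DERIV_add[OF lgd[OF x(2)] DERIV_cdivide[OF DERIV_cmult[OF m_deriv]]])
    moreover have "\<gamma> x + 4 * deriv m x / r1 \<le> 0" using g1[OF x(2)] by simp
    ultimately show "\<exists>y. ((\<lambda>t. ln (g t) + 4 * m t / r1) has_real_derivative y) (at x) \<and> y \<le> 0" by blast
  qed
  have lim: "(g \<longlongrightarrow> 1) at_bot" unfolding g_def
  proof -
    have pre: "\<forall>\<tau>\<le>u1. (\<tau>, \<rho> \<tau>) \<in> exterior m \<and> (\<rho> has_real_derivative (- Fr m \<tau> (\<rho> \<tau>) / 2)) (at \<tau>)"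
      using ex rd by auto
    show "((\<lambda>\<tau>. \<psi> \<tau> (\<rho> \<tau>)) \<longlongrightarrow> 1) at_bot" using psi_scri pre by blast
  qed
  have llim: "((\<lambda>t. ln (g t)) \<longlongrightarrow> 0) at_bot"
    using tendsto_ln[OF lim] by simp
  have "0 \<le> ln (g u1)"
    by (rule tendsto_upperbound[OF llim]) (auto intro: eventually_at_bot_linorderI[of u1] mono1)
  moreover have "ln (g u1) - 4 * MM / r1 \<le> 0"
  proof (rule tendsto_lowerbound[OF llim])
    show "\<forall>\<^sub>F i in at_bot. ln (g u1) - 4 * MM / r1 \<le> ln (g i)"
    proof (rule eventually_at_bot_linorderI[of u1])
      fix \<tau> assume t: "\<tau> \<le> u1"
      have "4 * m \<tau> / r1 \<le> 4 * MM / r1" using MM(2)[of \<tau>] r1 M1 by (simp add: divide_right_mono)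
      moreover have "0 \<le> 4 * m u1 / r1" using m_pos[of u1] r1 M1 by simp
      ultimately show "ln (g u1) - 4 * MM / r1 \<le> ln (g \<tau>)" using mono2[OF t] by linarith
    qed
  qed simp
  moreover have "g u1 = \<psi> u1 r1" using chr_u1[OF r1] by (simp add: g_def \<rho>_def)
  moreover have "\<psi> u1 r1 > 0" using gpos[of u1] chr_u1[OF r1] by (simp add: g_def \<rho>_def)
  ultimately show ?thesis
    by (metis diff_le_0_iff_le exp_le_cancel_iff exp_ln ln_ge_zero_iff)
qed

definition "R0 = 10000 * MM"

lemma R0_ge: "R0 \<ge> 4 * MM + 1" "R0 > 2 * MM" "R0 > 0"
  using MM(1) by (auto simp: R0_def)

lemma psi_R0:
  assumes r: "r \<ge> R0"
  shows "1 \<le> \<psi> u r \<and> \<psi> u r \<le> 1001/1000"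
proof -
  have r1: "r \<ge> 4 * MM + 1" using r R0_ge by linarith
  have M1: "MM \<ge> 1" by (rule MM)
  have rp: "r > 0" using r1 M1 by simp
  have a: "4 * MM / r \<le> 4 / 10000" using r rp M1 by (simp add: R0_def divide_le_eq)
  have b: "0 \<le> 4 * MM / r" using rp M1 by simp
  have "exp (4 * MM / r) \<le> 1 + 2 * (4 * MM / r)"
    by (rule real_exp_bound_lemma) (use a b in auto)
  then have "exp (4 * MM / r) \<le> 1001/1000" using a by simp
  then show ?thesis using psi_bounds[OF r1, of u] by simp
qed

lemma Fr_R0:
  assumes r: "r \<ge> R0"
  shows "9998/10000 \<le> Fr m u r"
proof -
  have M1: "MM \<ge> 1" by (rule MM)
  have rp: "r > 0" using r R0_ge by linarith
  have "2 * m u / r \<le> 2 / 10000" using r rp M1 MM(2)[of u] by (simp add: R0_def divide_le_eq)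
  then show ?thesis by (simp add: Fr_def)
qed

lemma vr_R0:
  assumes r: "r \<ge> R0"
  shows "2 \<le> 2 * \<psi> u r / Fr m u r \<and> 2 * \<psi> u r / Fr m u r \<le> 2003/1000"
proof -
  have ex: "(u, r) \<in> exterior m" using ext_big r R0_ge by force
  have F: "0 < Fr m u r" "Fr m u r \<le> 1" "9998/10000 \<le> Fr m u r" using Fr_pos[OF ex] Fr_le1[OF ex] Fr_R0[OF r] by auto
  have p: "1 \<le> \<psi> u r" "\<psi> u r \<le> 1001/1000" using psi_R0[OF r] by auto
  have "2 \<le> 2 * \<psi> u r / Fr m u r" using F p by (simp add: le_divide_eq)
  moreover have "2 * \<psi> u r \<le> 2003/1000 * (9998/10000)" using p by simp
  then have "2 * \<psi> u r \<le> 2003/1000 * Fr m u r" using F by linarith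
  then have "2 * \<psi> u r / Fr m u r \<le> 2003/1000" using F by (simp add: divide_le_eq)
  ultimately show ?thesis by simp
qed

lemma VA:
  assumes "R0 \<le> a" "a \<le> b"
  shows "2 * (b - a) \<le> v u b - v u a \<and> v u b - v u a \<le> 2003/1000 * (b - a)"
proof -
  have der: "((\<lambda>x. v u x) has_real_derivative (2 * \<psi> u x / Fr m u x)) (at x)" if "a \<le> x" for x
    using v_r[of u x] ext_big[of x u] R0_ge that assms by force
  have "(\<lambda>x. v u x - 2 * x) a \<le> (\<lambda>x. v u x - 2 * x) b"
  proof (rule DERIV_nonneg_imp_nondecreasing[OF assms(2)])
    fix x assume x: "a \<le> x" "x \<le> b"
    show "\<exists>y. ((\<lambda>x. v u x - 2 * x) has_real_derivative y) (at x) \<and> 0 \<le> y"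
      using DERIV_diff[OF der[OF x(1)] DERIV_cmult[OF DERIV_ident, of 2]] vr_R0[of x u] x assms
      by (intro exI conjI) auto
  qed
  moreover have "(\<lambda>x. 2003/1000 * x - v u x) a \<le> (\<lambda>x. 2003/1000 * x - v u x) b"
  proof (rule DERIV_nonneg_imp_nondecreasing[OF assms(2)])
    fix x assume x: "a \<le> x" "x \<le> b"
    show "\<exists>y. ((\<lambda>x. 2003/1000 * x - v u x) has_real_derivative y) (at x) \<and> 0 \<le> y"
      using DERIV_diff[OF DERIV_cmult[OF DERIV_ident, of "2003/1000"] der[OF x(1)]] vr_R0[of x u] x assms
      by (intro exI conjI) auto
  qed
  ultimately show ?thesis by (simp add: algebra_simps)
qed

lemma VB:
  assumes "R0 \<le> r" "a \<le> b"
  shows "b - a \<le> v b r - v a r \<and> v b r - v a r \<le> 1001/1000 * (b - a)"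
proof -
  have rr: "r > 2 * MM" using assms R0_ge by linarith
  have der: "((\<lambda>t. v t r) has_real_derivative \<psi> x r) (at x)" for x
    by (rule v_u[OF rr])
  have "(\<lambda>t. v t r - t) a \<le> (\<lambda>t. v t r - t) b"
  proof (rule DERIV_nonneg_imp_nondecreasing[OF assms(2)])
    fix x assume x: "a \<le> x" "x \<le> b"
    show "\<exists>y. ((\<lambda>t. v t r - t) has_real_derivative y) (at x) \<and> 0 \<le> y"
      using DERIV_diff[OF der[of x] DERIV_ident] psi_R0[OF assms(1), of x]
      by (intro exI conjI) auto
  qed
  moreover have "(\<lambda>t. 1001/1000 * t - v t r) a \<le> (\<lambda>t. 1001/1000 * t - v t r) b"
  proof (rule DERIV_nonneg_imp_nondecreasing[OF assms(2)])
    fix x assume x: "a \<le> x" "x \<le> b"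
    show "\<exists>y. ((\<lambda>t. 1001/1000 * t - v t r) has_real_derivative y) (at x) \<and> 0 \<le> y"
      using DERIV_diff[OF DERIV_cmult[OF DERIV_ident, of "1001/1000"] der[of x]] psi_R0[OF assms(1), of x]
      by (intro exI conjI) auto
  qed
  ultimately show ?thesis by (simp add: algebra_simps)
qed

definition "UU = - (100 * (\<bar>v 0 R0\<bar> + 2 * R0) + 1)"

lemma UU_neg: "UU < 0" using R0_ge by (simp add: UU_def)

lemma Hs_eq:
  assumes s: "0 < s" and h: "(u, R) \<in> Hs m v u0 s"
  shows "R > 0" "1 / R > 2 * m u" "u < u0" "v u (1 / R) - u = - 2 * u / s"
proof -
  show "R > 0" "1 / R > 2 * m u" "u < u0" using h by (auto simp: Hs_def)
  have "u = - s * ((v u (1 / R) - u) / 2)" using h by (auto simp: Hs_def)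
  then show "v u (1 / R) - u = - 2 * u / s" using s by (simp add: field_simps)
qed

lemma Hs_pt:
  assumes s: "0 < s" "s \<le> 1" and u0: "u0 \<le> UU" and h: "(u, R) \<in> Hs m v u0 s"
  shows "R0 \<le> 1 / R" "99/100 \<le> - u * R / s" "- u * R / s \<le> 101/100"
proof -
  define r where "r = 1 / R"
  define L where "L = - u / s"
  define V0 where "V0 = v 0 R0"
  note H = Hs_eq[OF s(1) h]
  have Rp: "R > 0" using H by simp
  have rp: "r > 0" using Rp by (simp add: r_def)
  have ur: "u < UU" using H u0 by simp
  have un: "- u > 100 * \<bar>V0\<bar> + 200 * R0 + 1" using ur by (simp add: UU_def V0_def)
  have R0p: "R0 > 0" using R0_ge by simp
  have uneg: "u < 0" using un R0p abs_ge_zero[of V0] by linarith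
  have Lu: "L \<ge> - u"
  proof -
    have "- u / s \<ge> - u / 1" using s uneg by (intro divide_left_mono) auto
    then show ?thesis by (simp add: L_def)
  qed
  have eq: "v u r - u = 2 * L" using H(4) by (simp add: r_def L_def)
  have rm: "r > 2 * m u" using H(2) by (simp add: r_def)
  have VBu: "v u R0 \<le> V0 + u" using VB[of R0 u 0] uneg by (simp add: V0_def)
  show rR0: "R0 \<le> 1 / R"
  proof (rule ccontr)
    assume "\<not> R0 \<le> 1 / R"
    then have "r < R0" by (simp add: r_def)
    then have "v u r < v u R0" using v_r_strict[OF rm] by blast
    then have "2 * L < V0" using eq VBu by linarith
    moreover have "V0 \<le> \<bar>V0\<bar>" by simp
    ultimately show False using Lu un R0p abs_ge_zero[of V0] by linarith
  qed
  then have rR0': "R0 \<le> r" by (simp add: r_def)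
  have b: "2 * L \<le> V0 + 2003/1000 * r"
  proof -
    have "v u r - v u R0 \<le> 2003/1000 * (r - R0)" using VA[OF order_refl rR0'] by simp
    then show ?thesis using eq VBu R0p by (unfold ring_distribs, linarith)
  qed
  have c: "2 * L \<ge> V0 + 2 * r - 2 * R0 - 1/1000 * L"
  proof -
    have "v 0 r - v u r \<le> 1001/1000 * (0 - u)" using VB[OF rR0', of u 0] uneg by simp
    moreover have "2 * (r - R0) \<le> v 0 r - V0" using VA[OF order_refl rR0', of 0] by (simp add: V0_def)
    ultimately show ?thesis using eq Lu by (unfold ring_distribs, linarith)
  qed
  have small: "\<bar>V0\<bar> + 2 * R0 \<le> L / 100" using un Lu by linarith
  have V0a: "- \<bar>V0\<bar> \<le> V0" "V0 \<le> \<bar>V0\<bar>" by auto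
  have y: "- u * R / s = L / r" by (simp add: L_def r_def)
  have "99/100 * r \<le> L" using c small V0a R0p by linarith
  then show "99/100 \<le> - u * R / s" unfolding y using rp by (simp add: le_divide_eq)
  have "L \<le> 101/100 * r" using b small V0a R0p by linarith
  then show "- u * R / s \<le> 101/100" unfolding y using rp by (simp add: divide_le_eq)
qed

lemma Hs_exists:
  assumes s: "0 < s" "s \<le> 1" and u0: "u0 \<le> UU" and u: "u < u0"
  shows "\<exists>R. (u, R) \<in> Hs m v u0 s"
proof -
  define L where "L = - u / s"
  define V0 where "V0 = v 0 R0"
  have R0p: "R0 > 0" using R0_ge by simp
  have un: "- u > 100 * \<bar>V0\<bar> + 200 * R0 + 1" using u u0 by (simp add: UU_def V0_def)
  have uneg: "u < 0" using un R0p abs_ge_zero[of V0] by linarith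
  have Lu: "L \<ge> - u"
  proof -
    have "- u / s \<ge> - u / 1" using s uneg by (intro divide_left_mono) auto
    then show ?thesis by (simp add: L_def)
  qed
  have VBu: "v u R0 \<le> V0 + u" using VB[of R0 u 0] uneg by (simp add: V0_def)
  define rb where "rb = R0 + 2 * L"
  have rb: "R0 \<le> rb" using Lu uneg by (simp add: rb_def)
  have fa: "v u R0 \<le> u + 2 * L" using VBu Lu un R0p abs_ge_self[of V0] abs_ge_zero[of V0] by linarith
  have fb: "u + 2 * L \<le> v u rb"
  proof -
    have "v 0 rb - v u rb \<le> 1001/1000 * (0 - u)" using VB[OF rb, of u 0] uneg by simp
    moreover have "2 * (rb - R0) \<le> v 0 rb - V0" using VA[OF order_refl rb, of 0] by (simp add: V0_def)
    moreover have "- \<bar>V0\<bar> \<le> V0" by simp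
    ultimately show ?thesis using Lu un uneg R0p abs_ge_zero[of V0] unfolding rb_def by (unfold ring_distribs, linarith)
  qed
  have "2 * m u < R0" using MM(2)[of u] R0_ge by linarith
  then obtain r where r: "R0 \<le> r" "r \<le> rb" "v u r = u + 2 * L"
    using IVT'[of "v u" R0 "u + 2 * L" rb] fa fb rb v_r_cont[of u R0 rb] by auto
  have "(u, 1 / r) \<in> Hs m v u0 s"
    unfolding Hs_def using r R0p \<open>2 * m u < R0\<close> u s by (auto simp: L_def field_simps)
  then show ?thesis by blast
qed

lemma Hs_R_eq:
  assumes s: "0 < s" and h: "(u, R) \<in> Hs m v u0 s"
  shows "Hs_R m v u0 s u = R"
  unfolding Hs_R_def
proof (rule the_equality)
  show "(u, R) \<in> Hs m v u0 s" by (rule h)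
  fix R' assume h': "(u, R') \<in> Hs m v u0 s"
  note H = Hs_eq[OF s h] and H' = Hs_eq[OF s h']
  have "1 / R' = 1 / R" using v_r_inj[of u "1 / R'" "1 / R"] H H' by simp
  then show "R' = R" by simp
qed

lemma Hs_full:
  assumes s: "0 < s" "s \<le> 1" and u0: "u0 \<le> UU" and u: "u < u0"
  shows "(u, Hs_R m v u0 s u) \<in> Hs m v u0 s"
proof -
  obtain R where "(u, R) \<in> Hs m v u0 s" using Hs_exists[OF s u0 u] by blast
  then show ?thesis using Hs_R_eq[OF s(1)] by simp
qed

lemma Hs_r_lip1:
  assumes s: "0 < s" "s \<le> 1" and u0: "u0 \<le> UU" and ab: "ua < ub" "ub < u0"
  shows "\<bar>1 / Hs_R m v u0 s ua - 1 / Hs_R m v u0 s ub\<bar> \<le> (1 / s + 1) * \<bar>ua - ub\<bar>"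
proof -
  define ra where "ra = 1 / Hs_R m v u0 s ua"
  define rb where "rb = 1 / Hs_R m v u0 s ub"
  have ha: "(ua, Hs_R m v u0 s ua) \<in> Hs m v u0 s" using Hs_full[OF s u0] ab by simp
  have hb: "(ub, Hs_R m v u0 s ub) \<in> Hs m v u0 s" using Hs_full[OF s u0] ab by simp
  have ra0: "R0 \<le> ra" using Hs_pt(1)[OF s u0 ha] by (simp add: ra_def)
  have rb0: "R0 \<le> rb" using Hs_pt(1)[OF s u0 hb] by (simp add: rb_def)
  have ea: "v ua ra - ua = - 2 * ua / s" using Hs_eq(4)[OF s(1) ha] by (simp add: ra_def)
  have eb: "v ub rb - ub = - 2 * ub / s" using Hs_eq(4)[OF s(1) hb] by (simp add: rb_def)
  define d where "d = ub - ua"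
  have d0: "d > 0" using ab by (simp add: d_def)
  have D: "v ua ra - v ub rb = 2 * (d / s) - d"
    using ea eb s by (simp add: d_def field_simps)
  have ds: "d / s \<ge> d" using d0 s by (simp add: le_divide_eq)
  have vb: "d \<le> v ub rb - v ua rb \<and> v ub rb - v ua rb \<le> 1001/1000 * d"
    using VB[OF rb0, of ua ub] ab by (simp add: d_def)
  have le: "rb \<le> ra"
  proof (rule ccontr)
    assume "\<not> rb \<le> ra"
    then have "v ua ra < v ua rb" using v_r_strict[of ua ra rb] ra0 R0_ge MM(2)[of ua] by simp
    then show False using D vb ds d0 by linarith
  qed
  have "2 * (ra - rb) \<le> v ua ra - v ua rb" using VA[OF rb0 le, of ua] by simp
  then have "2 * (ra - rb) \<le> 2 * (d / s) - d + 1001/1000 * d" using D vb by linarith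
  then have "ra - rb \<le> d / s + d" using d0 by (unfold ring_distribs, linarith)
  moreover have "(1 / s + 1) * \<bar>ua - ub\<bar> = d / s + d" using d0 by (simp add: d_def field_simps)
  ultimately show ?thesis using le by (simp add: ra_def rb_def)
qed

lemma Hs_r_cont:
  assumes s: "0 < s" "s \<le> 1" and u0: "u0 \<le> UU"
  shows "continuous_on {u. u < u0} (\<lambda>u. 1 / Hs_R m v u0 s u)"
proof (rule lipschitz_on_continuous_on)
  show "(1 / s + 1)-lipschitz_on {u. u < u0} (\<lambda>u. 1 / Hs_R m v u0 s u)"
  proof (rule lipschitz_onI)
    fix x y assume x: "x \<in> {u. u < u0}" and y: "y \<in> {u. u < u0}"
    show "dist (1 / Hs_R m v u0 s x) (1 / Hs_R m v u0 s y) \<le> (1 / s + 1) * dist x y"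
    proof (cases x y rule: linorder_cases)
      case less then show ?thesis using Hs_r_lip1[OF s u0 less] y by (simp add: dist_real_def)
    next
      case greater then show ?thesis using Hs_r_lip1[OF s u0 greater] x
        by (simp add: dist_real_def abs_minus_commute)
    qed simp
  qed (use s in simp)
qed

lemma Hs_R_cont:
  assumes s: "0 < s" "s \<le> 1" and u0: "u0 \<le> UU"
  shows "continuous_on {u. u < u0} (Hs_R m v u0 s)"
proof -
  have pos: "1 / Hs_R m v u0 s u \<noteq> 0" if "u \<in> {u. u < u0}" for u
    using Hs_eq(1)[OF s(1) Hs_full[OF s u0, of u]] that by simp
  have "continuous_on {u. u < u0} (\<lambda>u. 1 / (1 / Hs_R m v u0 s u))"
    by (rule continuous_on_divide[OF continuous_on_const Hs_r_cont[OF s u0]]) (use pos in blast)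
  then show ?thesis by simp
qed

lemma psi_cont: "continuous_on (exterior m) (\<lambda>(a, b). \<psi> a b)"
proof (intro continuous_at_imp_continuous_on ballI)
  fix z assume z: "z \<in> exterior m"
  obtain a b where ab: "z = (a, b)" by (cases z)
  obtain D where "((\<lambda>(a, b). \<psi> a b) has_derivative D) (at (a, b))" using psi_eq z ab by blast
  then show "isCont (\<lambda>(a, b). \<psi> a b) z" using has_derivative_continuous ab by blast
qed

lemma main:
  assumes s: "0 < s" "s \<le> 1" and u0: "u0 \<le> UU"
    and cover: "\<forall>u R x. (u, R) \<in> Omega m v u0 \<longrightarrow> x \<in> sphere 0 1 \<longrightarrow> (u, R, x) \<in> S"
    and sm: "smooth_on S \<phi>"
    and intI: "set_integrable lborel (Hs_param m v u0 s) (on_Hs m v u0 s (I_density \<phi>))"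
  shows "set_integrable lborel (Hs_param m v u0 s) (on_Hs m v u0 s (energy_density m \<psi> s \<phi>))
        \<and> 1/100 * I_Hs m v u0 s \<phi> \<le> energy_Hs m \<psi> v u0 s \<phi>
        \<and> energy_Hs m \<psi> v u0 s \<phi> \<le> 5 * I_Hs m v u0 s \<phi>"
proof -
  define HP where "HP = Hs_param m v u0 s"
  define Rh where "Rh = Hs_R m v u0 s"
  define fE where "fE = on_Hs m v u0 s (energy_density m \<psi> s \<phi>)"
  define fI where "fI = on_Hs m v u0 s (I_density \<phi>)"
  have u0n: "u0 < 0" using u0 UU_neg by simp
  have HPeq: "HP = {..<u0} \<times> ({0<..<pi} \<times> {0<..<2*pi})"
  proof (intro set_eqI)
    fix q :: "real \<times> real \<times> real"
    obtain u th vp where q: "q = (u, th, vp)" by (cases q) auto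
    show "q \<in> HP \<longleftrightarrow> q \<in> {..<u0} \<times> ({0<..<pi} \<times> {0<..<2*pi})"
      unfolding q HP_def Hs_param_def using Hs_eq(3)[OF s(1)] Hs_exists[OF s u0, of u] by auto
  qed
  have HPopen: "open HP" unfolding HPeq by (intro open_Times) auto
  have HPu: "fst q < u0" if "q \<in> HP" for q using that HPeq by auto
  have hs: "(fst q, Rh (fst q)) \<in> Hs m v u0 s" if "q \<in> HP" for q
    using Hs_full[OF s u0 HPu[OF that]] by (simp add: Rh_def)
  have Rpos: "Rh (fst q) > 0" if "q \<in> HP" for q using Hs_eq(1)[OF s(1) hs[OF that]] .
  have pw: "1/100 * fI q \<le> fE q \<and> fE q \<le> 5 * fI q" if qH: "q \<in> HP" for q
  proof -
    obtain u th vp where q: "q = (u, th, vp)" by (cases q) auto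
    define R where "R = Rh u"
    define x where "x = sph th vp"
    have h: "(u, R) \<in> Hs m v u0 s" using hs[OF qH] by (simp add: q R_def)
    have uu: "u < u0" using HPu[OF qH] by (simp add: q)
    have un: "u < 0" using uu u0n by simp
    have th: "0 < th" "th < pi" using qH HPeq q by auto
    have sinp: "sin th > 0" using th by (rule sin_gt_zero)
    have Rp: "R > 0" using Hs_eq(1)[OF s(1) h] .
    have rR0: "R0 \<le> 1 / R" and y1: "99/100 \<le> - u * R / s" and y2: "- u * R / s \<le> 101/100"
      using Hs_pt[OF s u0 h] by auto
    have ps: "1 \<le> \<psi> u (1 / R)" "\<psi> u (1 / R) \<le> 1001/1000" using psi_R0[OF rR0, of u] by auto
    have G0: "sph_grad_sq \<phi> u R x \<ge> 0" by (simp add: sph_grad_sq_def Let_def)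
    have qb: "2 * m u * R \<le> 2/10000"
    proof -
      have R0p: "R0 > 0" using R0_ge by simp
      have "R \<le> 1 / R0" using rR0 Rp R0p by (simp add: le_divide_eq field_simps)
      then have "m u * R \<le> MM * (1 / R0)" using MM(2)[of u] m_pos[of u] Rp
        by (intro mult_mono) auto
      moreover have "MM * (1 / R0) = 1 / 10000" using MM(1) by (simp add: R0_def)
      ultimately show ?thesis by simp
    qed
    note P = pointwise[of s u R "m u" "sph_grad_sq \<phi> u R x" "\<psi> u (1 / R)" "phi_u \<phi> u R x" "phi_R \<phi> u R x",
        OF s(1) s(2) un Rp m_pos[of u] G0 y1 y2 ps qb]
    have eE: "fE q = energy_density m \<psi> s \<phi> u R x * sin th"
      by (simp add: fE_def on_Hs_def q R_def Rh_def x_def)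
    have eI: "fI q = I_density \<phi> u R x * sin th"
      by (simp add: fI_def on_Hs_def q R_def Rh_def x_def)
    have "1/100 * I_density \<phi> u R x \<le> energy_density m \<psi> s \<phi> u R x \<and>
          energy_density m \<psi> s \<phi> u R x \<le> 5 * I_density \<phi> u R x"
      using P unfolding energy_density_def I_density_def Let_def by simp
    then show ?thesis unfolding eE eI using sinp
      by (auto intro: mult_right_mono simp: mult.assoc[symmetric])
  qed
  have cE: "continuous_on HP fE"
  proof -
    have HPfst: "fst ` HP \<subseteq> {u. u < u0}" using HPu by auto
    have cRh: "continuous_on HP (\<lambda>q. Rh (fst q))"
      unfolding Rh_def using continuous_on_compose2[OF Hs_R_cont[OF s u0] continuous_on_fst[OF continuous_on_id], of HP] HPfst
      by simp
    have cX: "continuous_on HP (\<lambda>q. sph (fst (snd q)) (snd (snd q)))"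
      by (intro sph_cont continuous_intros)
    define \<Phi> where "\<Phi> q = (fst q, Rh (fst q), sph (fst (snd q)) (snd (snd q)))" for q
    have c\<Phi>: "continuous_on HP \<Phi>" unfolding \<Phi>_def
      by (intro continuous_on_Pair cRh cX continuous_intros)
    have \<Phi>S: "\<Phi> ` HP \<subseteq> S"
    proof
      fix z assume "z \<in> \<Phi> ` HP"
      then obtain q where qH: "q \<in> HP" and z: "z = \<Phi> q" by blast
      define u where "u = fst q"
      define R where "R = Rh u"
      have h: "(u, R) \<in> Hs m v u0 s" using hs[OF qH] by (simp add: u_def R_def)
      note H = Hs_eq[OF s(1) h]
      have un: "u < 0" using H(3) u0n by simp
      have "- 2 * u / s \<ge> - 2 * u / 1" using s un by (intro divide_left_mono) auto
      then have "(u + v u (1 / R)) / 2 \<ge> 0" using H(4) by simp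
      then have "(u, R) \<in> Omega m v u0" using H by (simp add: Omega_def)
      moreover have "sph (fst (snd q)) (snd (snd q)) \<in> sphere 0 1" by (simp add: sph_norm)
      ultimately show "z \<in> S" using cover by (simp add: z \<Phi>_def u_def R_def)
    qed
    have cD: "continuous_on HP (\<lambda>q. frechet_derivative \<phi> (at (\<Phi> q)) e)" if "e \<in> Basis" for e
      by (rule continuous_on_compose2[OF smooth_deriv_cont[OF sm that] c\<Phi> \<Phi>S])
    define Pu where "Pu q = phi_u \<phi> (fst q) (Rh (fst q)) (sph (fst (snd q)) (snd (snd q)))" for q :: "real \<times> real \<times> real"
    define Pr where "Pr q = phi_R \<phi> (fst q) (Rh (fst q)) (sph (fst (snd q)) (snd (snd q)))" for q :: "real \<times> real \<times> real"
    define Gq where "Gq q = sph_grad_sq \<phi> (fst q) (Rh (fst q)) (sph (fst (snd q)) (snd (snd q)))" for q :: "real \<times> real \<times> real"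
    define Pq where "Pq q = \<psi> (fst q) (1 / Rh (fst q))" for q :: "real \<times> real \<times> real"
    have cPu: "continuous_on HP Pu"
      using cD[OF basis_elems(1)] unfolding Pu_def phi_u_def \<Phi>_def .
    have cPr: "continuous_on HP Pr"
      using cD[OF basis_elems(2)] unfolding Pr_def phi_R_def \<Phi>_def .
    have cGq: "continuous_on HP Gq"
    proof -
      have cg: "continuous_on HP (\<lambda>q. grad_x \<phi> (fst q) (Rh (fst q)) (sph (fst (snd q)) (snd (snd q))))"
        unfolding grad_x_def
        by (intro continuous_on_vec_lambda) (use cD[OF basis_elems(3)] in \<open>simp add: \<Phi>_def\<close>)
      show ?thesis unfolding Gq_def sph_grad_sq_def Let_def
        by (intro continuous_intros cg cX)
    qed
    have cPq: "continuous_on HP Pq"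
    proof -
      have c1: "continuous_on HP (\<lambda>q. (fst q, 1 / Rh (fst q)))"
        by (intro continuous_intros cRh) (use Rpos in force)
      have img: "(\<lambda>q. (fst q, 1 / Rh (fst q))) ` HP \<subseteq> exterior m"
        using Hs_eq(2)[OF s(1) hs] by (auto simp: ext_iff)
      show ?thesis using continuous_on_compose2[OF psi_cont c1 img] unfolding Pq_def by simp
    qed
    have Pqpos: "Pq q > 0" if "q \<in> HP" for q
      unfolding Pq_def using psi_pos Hs_eq(2)[OF s(1) hs[OF that]] by (simp add: ext_iff)
    have cm: "continuous_on HP (\<lambda>q. m (fst q))"
      by (rule continuous_on_compose2[OF m_cont continuous_on_fst[OF continuous_on_id]]) auto
    have eqE: "fE q = (let F = 1 - 2 * m (fst q) * Rh (fst q); p = Pq q; pu = Pu q; pR = Pr q; G = Gq q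
      in (fst q)\<^sup>2 * pu\<^sup>2 + (fst q)\<^sup>2 * (Rh (fst q))\<^sup>2 * F * pu * pR
         + G * ((fst q)\<^sup>2 * F * (Rh (fst q))\<^sup>2 / (4 * s * p) * (2 + s * (p - 1)) + (1 + fst q * Rh (fst q)))
         + (Rh (fst q))\<^sup>2 * F * ((2 + s * (p - 1)) / (4 * s * p) * ((2 + fst q * Rh (fst q))\<^sup>2 - 2 * m (fst q) * (fst q)\<^sup>2 * (Rh (fst q)) ^ 3)
                       - (1 + fst q * Rh (fst q))) * pR\<^sup>2) * sin (fst (snd q))" for q
      by (cases q) (simp add: fE_def on_Hs_def energy_density_def Rh_def Pu_def Pr_def Gq_def Pq_def)
    have "continuous_on HP (\<lambda>q. (let F = 1 - 2 * m (fst q) * Rh (fst q); p = Pq q; pu = Pu q; pR = Pr q; G = Gq q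
      in (fst q)\<^sup>2 * pu\<^sup>2 + (fst q)\<^sup>2 * (Rh (fst q))\<^sup>2 * F * pu * pR
         + G * ((fst q)\<^sup>2 * F * (Rh (fst q))\<^sup>2 / (4 * s * p) * (2 + s * (p - 1)) + (1 + fst q * Rh (fst q)))
         + (Rh (fst q))\<^sup>2 * F * ((2 + s * (p - 1)) / (4 * s * p) * ((2 + fst q * Rh (fst q))\<^sup>2 - 2 * m (fst q) * (fst q)\<^sup>2 * (Rh (fst q)) ^ 3)
                       - (1 + fst q * Rh (fst q))) * pR\<^sup>2) * sin (fst (snd q)))"
      unfolding Let_def
      by (intro continuous_intros cRh cm cPu cPr cGq cPq) (use Pqpos s in force)+
    then show ?thesis using eqE by simp
  qed
  have HPb: "HP \<in> sets borel" using HPopen by simp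
  have meas: "(\<lambda>q. indicator HP q *\<^sub>R fE q) \<in> borel_measurable lborel"
    using borel_measurable_continuous_on_indicator[OF HPb cE] by simp
  have intI': "integrable lborel (\<lambda>q. indicator HP q *\<^sub>R fI q)"
    using intI unfolding set_integrable_def HP_def fI_def .
  have int5: "integrable lborel (\<lambda>q. 5 * (indicator HP q *\<^sub>R fI q))"
    by (rule integrable_mult_right) (rule intI')
  have intE: "set_integrable lborel HP fE"
    unfolding set_integrable_def
  proof (rule Bochner_Integration.integrable_bound[OF int5 meas])
    show "AE x in lborel. norm (indicator HP x *\<^sub>R fE x) \<le> norm (5 * (indicator HP x *\<^sub>R fI x))"
    proof (rule AE_I2)
      fix q show "norm (indicator HP q *\<^sub>R fE q) \<le> norm (5 * (indicator HP q *\<^sub>R fI q))"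
      proof (cases "q \<in> HP")
        case True then show ?thesis using pw[OF True] by (simp add: indicator_def)
      next
        case False then show ?thesis by simp
      qed
    qed
  qed
  have intI2: "set_integrable lborel HP fI" using intI by (simp add: HP_def fI_def)
  have lo: "(LINT q:HP|lborel. 1/100 * fI q) \<le> (LINT q:HP|lborel. fE q)"
    by (rule set_integral_mono) (use intI2 intE pw in auto)
  have hi: "(LINT q:HP|lborel. fE q) \<le> (LINT q:HP|lborel. 5 * fI q)"
    by (rule set_integral_mono) (use intI2 intE pw in auto)
  show ?thesis
    using intE lo hi unfolding energy_Hs_def I_Hs_def HP_def fE_def fI_def by simp
qed
end

theorem proposition3p2:
  fixes m :: "real \<Rightarrow> real" and \<psi> v :: "real \<Rightarrow> real \<Rightarrow> real"
  assumes m_smooth: "smooth_on UNIV m"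
    and m_nonincr: "\<And>a b. a \<le> b \<Longrightarrow> m b \<le> m a"
    and m_pos: "\<And>u. m u > 0"
    and m_bdd: "bounded (range m)"
    and psi_pos: "\<And>u r. (u, r) \<in> exterior m \<Longrightarrow> \<psi> u r > 0"
    and psi_eq: "\<And>u r. (u, r) \<in> exterior m \<Longrightarrow>
        \<exists>D. ((\<lambda>(a, b). \<psi> a b) has_derivative D) (at (u, r)) \<and>
            D (1, - Fr m u r / 2) + 2 * deriv m u / (Fr m u r * r) * \<psi> u r = 0"
    and psi_scri: "\<And>\<rho> \<tau>0. (\<forall>\<tau>\<le>\<tau>0. (\<tau>, \<rho> \<tau>) \<in> exterior m \<and>
                     (\<rho> has_real_derivative (- Fr m \<tau> (\<rho> \<tau>) / 2)) (at \<tau>))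
        \<Longrightarrow> ((\<lambda>\<tau>. \<psi> \<tau> (\<rho> \<tau>)) \<longlongrightarrow> 1) at_bot"
    and v_diff: "\<And>u r. (u, r) \<in> exterior m \<Longrightarrow>
        ((\<lambda>(a, b). v a b) has_derivative
           (\<lambda>(du, dr). \<psi> u r * du + 2 * \<psi> u r / Fr m u r * dr)) (at (u, r))"
  shows "\<exists>U. \<forall>u0. u0 < U \<longrightarrow> u0 < 0 \<longrightarrow>
          (\<exists>c C. 0 < c \<and> c \<le> C \<and>
            (\<forall>s \<in> {0<..1}. \<forall>\<phi> :: real \<times> real \<times> (real^3) \<Rightarrow> real. \<forall>S.
               (\<forall>u R x. (u, R) \<in> Omega m v u0 \<longrightarrow> x \<in> sphere 0 1 \<longrightarrow> (u, R, x) \<in> S)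
               \<longrightarrow> smooth_on S \<phi>
               \<longrightarrow> set_integrable lborel (Hs_param m v u0 s) (on_Hs m v u0 s (I_density \<phi>))
               \<longrightarrow> set_integrable lborel (Hs_param m v u0 s) (on_Hs m v u0 s (energy_density m \<psi> s \<phi>))
                   \<and> c * I_Hs m v u0 s \<phi> \<le> energy_Hs m \<psi> v u0 s \<phi>
                   \<and> energy_Hs m \<psi> v u0 s \<phi> \<le> C * I_Hs m v u0 s \<phi>))"
  proof -
  interpret V: vaidya m \<psi> v
    by (rule vaidya.intro[OF m_smooth m_nonincr m_pos m_bdd psi_pos psi_eq psi_scri v_diff])
  show ?thesis
  proof (rule exI[of _ V.UU], intro allI impI)
    fix u0 :: real assume u0: "u0 < V.UU" "u0 < 0"
    show "\<exists>c C. 0 < c \<and> c \<le> C \<and>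
            (\<forall>s \<in> {0<..1}. \<forall>\<phi> :: real \<times> real \<times> (real^3) \<Rightarrow> real. \<forall>S.
               (\<forall>u R x. (u, R) \<in> Omega m v u0 \<longrightarrow> x \<in> sphere 0 1 \<longrightarrow> (u, R, x) \<in> S)
               \<longrightarrow> smooth_on S \<phi>
               \<longrightarrow> set_integrable lborel (Hs_param m v u0 s) (on_Hs m v u0 s (I_density \<phi>))
               \<longrightarrow> set_integrable lborel (Hs_param m v u0 s) (on_Hs m v u0 s (energy_density m \<psi> s \<phi>))
                   \<and> c * I_Hs m v u0 s \<phi> \<le> energy_Hs m \<psi> v u0 s \<phi>
                   \<and> energy_Hs m \<psi> v u0 s \<phi> \<le> C * I_Hs m v u0 s \<phi>)"
    proof (rule exI[of _ "1/100"], rule exI[of _ 5], intro conjI ballI allI impI)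
      fix s :: real and \<phi> :: "real \<times> real \<times> (real^3) \<Rightarrow> real" and S
      assume s: "s \<in> {0<..1}"
        and cover: "\<forall>u R x. (u, R) \<in> Omega m v u0 \<longrightarrow> x \<in> sphere 0 1 \<longrightarrow> (u, R, x) \<in> S"
        and sm: "smooth_on S \<phi>"
        and intI: "set_integrable lborel (Hs_param m v u0 s) (on_Hs m v u0 s (I_density \<phi>))"
      have s': "0 < s" "s \<le> 1" using s by auto
      note M = V.main[OF s' _ cover sm intI]
      have "u0 \<le> V.UU" using u0 by simp
      note M' = M[OF this]
      show "set_integrable lborel (Hs_param m v u0 s) (on_Hs m v u0 s (energy_density m \<psi> s \<phi>))"
        using M' by blast
      show "1/100 * I_Hs m v u0 s \<phi> \<le> energy_Hs m \<psi> v u0 s \<phi>" using M' by blast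
      show "energy_Hs m \<psi> v u0 s \<phi> \<le> 5 * I_Hs m v u0 s \<phi>" using M' by blast
    qed auto
  qed
qed

end
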